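(* Let $S$ be a finite set of possibly partial distributions all with total mass $\textsc{Mass}(S)$. Then $$\int_0^{\textsc{Mass}(S)}\log_2\!\left(\frac{1}{\textsc{Profile}_S(x)}\right)dx=\int_0^1\frac{\textsc{Inv-Prof}_S(y)}{y\ln 2}\,dy.$$
   Context: A possibly partial distribution $p$ is a finite vector of nonnegative reals sorted non-increasingly with total mass $\textsc{Mass}(p)\le 1$. $\textsc{Sketch}_p(x)=p(i)$ for $x\in(\sum_{j>i}p(j),\sum_{j\ge i}p(j)]$, and $\textsc{Profile}_S(x)=\min_{p\in S}\textsc{Sketch}_p(x)$ for $x\in(0,\textsc{Mass}(S)]$. The inverse sketch is $\textsc{Inv-Sketch}_p(y)=\sum_j p(j)\,[p(j)\le y]$ for $y\in[0,1]$, and the inverse profile is $\textsc{Inv-Prof}_S(y)=\max_{p\in S}\textsc{Inv-Sketch}_p(y)$. *)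

theory Defs
  imports "HOL-Analysis.Analysis"
begin

definition mass :: "real list \<Rightarrow> real" where
  "mass p = sum_list p"

definition is_pdist :: "real list \<Rightarrow> bool" where
  "is_pdist p \<longleftrightarrow> (\<forall>v\<in>set p. 0 \<le> v) \<and> sorted_wrt (\<ge>) p \<and> mass p \<le> 1"

definition tail_gt :: "real list \<Rightarrow> nat \<Rightarrow> real" where
  "tail_gt p i = (\<Sum>j\<in>{i<..<length p}. p ! j)"

definition tail_ge :: "real list \<Rightarrow> nat \<Rightarrow> real" where
  "tail_ge p i = (\<Sum>j\<in>{i..<length p}. p ! j)"

definition sketch :: "real list \<Rightarrow> real \<Rightarrow> real" where
  "sketch p x = (THE v. \<exists>i<length p. tail_gt p i < x \<and> x \<le> tail_ge p i \<and> v = p ! i)"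

definition profile :: "real list set \<Rightarrow> real \<Rightarrow> real" where
  "profile S x = Min ((\<lambda>p. sketch p x) ` S)"

definition inv_sketch :: "real list \<Rightarrow> real \<Rightarrow> real" where
  "inv_sketch p y = (\<Sum>j<length p. if p ! j \<le> y then p ! j else 0)"

definition inv_prof :: "real list set \<Rightarrow> real \<Rightarrow> real" where
  "inv_prof S y = Max ((\<lambda>p. inv_sketch p y) ` S)"

end

theory Submission
  imports Defs
begin


lemma log_integral:
  assumes a: "0 < a" "a \<le> 1"
  shows "((\<lambda>y. 1 / (y * ln 2)) has_integral log 2 (1 / a)) {a..1}"
proof -
  have "((\<lambda>y. 1 / (y * ln 2)) has_integral (ln 1 / ln 2 - ln a / ln 2)) {a..1}"
  proof (rule fundamental_theorem_of_calculus[OF a(2)])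
    fix y assume y: "y \<in> {a..1}"
    then have "y > 0" using a by auto
    then show "((\<lambda>y. ln y / ln 2) has_vector_derivative 1 / (y * ln 2)) (at y within {a..1})"
      by (auto intro!: derivative_eq_intros simp: has_real_derivative_iff_has_vector_derivative[symmetric])
  qed
  moreover have "ln 1 / ln 2 - ln a / ln 2 = log 2 (1 / a)"
    using a by (simp add: log_def ln_div)
  ultimately show ?thesis by simp
qed

lemma layer:
  fixes f h :: "real \<Rightarrow> real" and M c :: real
  assumes M: "0 \<le> M" and c: "0 < c"
    and fb: "\<And>x. 0 < x \<Longrightarrow> x \<le> M \<Longrightarrow> c \<le> f x \<and> f x \<le> 1"
    and eq: "\<And>x y. 0 < x \<Longrightarrow> x \<le> M \<Longrightarrow> f x \<le> y \<longleftrightarrow> x \<le> h y"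
    and hb: "\<And>y. 0 \<le> h y \<and> h y \<le> M"
  shows "\<exists>r. ((\<lambda>x. log 2 (1 / f x)) has_integral r) {0..M}
            \<and> ((\<lambda>y. h y / (y * ln 2)) has_integral r) {0..1}"
proof -
  have monoh: "mono h"
  proof
    fix y y' :: real assume yy: "y \<le> y'"
    show "h y \<le> h y'"
    proof (cases "h y = 0")
      case True then show ?thesis using hb[of y'] by simp
    next
      case False
      then have "0 < h y" "h y \<le> M" using hb[of y] by auto
      then have "f (h y) \<le> y" using eq[of "h y" y] by simp
      then have "f (h y) \<le> y'" using yy by simp
      then show ?thesis using eq[of "h y" y'] \<open>0 < h y\<close> \<open>h y \<le> M\<close> by simp
    qed
  qed
  have hmeas[measurable]: "h \<in> borel_measurable borel"
    by (rule borel_measurable_mono[OF monoh])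
  have monof: "mono_on {0<..M} (\<lambda>x. log 2 (f x))"
  proof (rule mono_onI)
    fix x x' assume xs: "x \<in> {0<..M}" "x' \<in> {0<..M}" "x \<le> x'"
    have "f x' \<le> f x'" by simp
    then have "x' \<le> h (f x')" using eq[of x' "f x'"] xs by simp
    then have "x \<le> h (f x')" using xs by simp
    then have "f x \<le> f x'" using eq[of x "f x'"] xs by simp
    moreover have "0 < f x" using fb[of x] xs c by auto
    ultimately show "log 2 (f x) \<le> log 2 (f x')" by simp
  qed
  define L where "L x = (if x \<in> {0<..M} then log 2 (1 / f x) else 0)" for x
  define R where "R y = (if y \<in> {0..1} then h y / (y * ln 2) else 0)" for y
  have "(\<lambda>x. indicator {0<..M} x *\<^sub>R log 2 (f x)) \<in> borel_measurable borel"
    using borel_measurable_mono_on_fnc[OF monof]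
    by (subst (asm) borel_measurable_restrict_space_iff) auto
  then have negm: "(\<lambda>x. - (indicator {0<..M} x *\<^sub>R log 2 (f x))) \<in> borel_measurable borel"
    by measurable
 have "(\<lambda>x. - (indicator {0<..M} x *\<^sub>R log 2 (f x))) = L"
  proof
    fix x show "- (indicator {0<..M} x *\<^sub>R log 2 (f x)) = L x"
      using fb[of x] c by (auto simp: L_def indicator_def log_divide)
  qed
  note negm[unfolded this]
  then have Lmeas[measurable]: "L \<in> borel_measurable borel" by simp
  have Rmeas[measurable]: "R \<in> borel_measurable borel"
    unfolding R_def by measurable
  have L0: "0 \<le> L x" for x
    using fb[of x] c by (auto simp: L_def log_divide)
  have R0: "0 \<le> R y" for y
    using hb[of y] by (auto simp: R_def)
  define K where "K x y = ennreal (if 0 < x \<and> x \<le> M \<and> 0 < y \<and> y \<le> 1 \<and> x \<le> h y then 1 / (y * ln 2) else 0)" for x y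
  have Kmeas: "case_prod K \<in> borel_measurable (lborel \<Otimes>\<^sub>M lborel)"
    unfolding K_def split_beta' by measurable
  have innerx: "(\<integral>\<^sup>+ y. K x y \<partial>lborel) = ennreal (L x)" for x
  proof (cases "x \<in> {0<..M}")
    case True
    then have fx: "0 < f x" "f x \<le> 1" using fb[of x] c by auto
    have "K x y = ennreal (indicator {f x..1} y * (1 / (y * ln 2)))" for y
      using True eq[of x y] fx by (auto simp: K_def indicator_def)
    then have "(\<integral>\<^sup>+ y. K x y \<partial>lborel) = (\<integral>\<^sup>+ y. ennreal (indicator {f x..1} y * (1 / (y * ln 2))) \<partial>lborel)"
      by simp
    also have "\<dots> = ennreal (log 2 (1 / f x))"
      by (rule nn_integral_has_integral_lebesgue[OF _ log_integral[OF fx]]) (use fx in auto)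
    finally show ?thesis using True by (simp add: L_def)
  next
    case False
    then have "K x y = 0" for y by (auto simp: K_def)
    then show ?thesis using False by (auto simp: L_def)
  qed
  have innery: "(\<integral>\<^sup>+ x. K x y \<partial>lborel) = ennreal (R y)" for y
  proof (cases "y \<in> {0<..1}")
    case True
    have "K x y = ennreal (1 / (y * ln 2)) * indicator {0<..h y} x" for x
      using True hb[of y] by (auto simp: K_def indicator_def)
    then have "(\<integral>\<^sup>+ x. K x y \<partial>lborel) = (\<integral>\<^sup>+ x. ennreal (1 / (y * ln 2)) * indicator {0<..h y} x \<partial>lborel)"
      by simp
    also have "\<dots> = ennreal (1 / (y * ln 2)) * ennreal (h y)"
      using hb[of y] by (subst nn_integral_cmult_indicator) auto
    also have "\<dots> = ennreal (R y)"
      using True hb[of y] by (simp add: R_def ennreal_mult[symmetric])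
    finally show ?thesis .
  next
    case False
    then have "K x y = 0" for x by (auto simp: K_def)
    then show ?thesis using False by (auto simp: R_def)
  qed
  have same: "(\<integral>\<^sup>+ y. ennreal (R y) \<partial>lborel) = (\<integral>\<^sup>+ x. ennreal (L x) \<partial>lborel)"
    using lborel_pair.Fubini'[OF Kmeas] innerx innery by simp
  have "(\<integral>\<^sup>+ x. ennreal (L x) \<partial>lborel) \<le> (\<integral>\<^sup>+ x. ennreal (log 2 (1 / c)) * indicator {0<..M} x \<partial>lborel)"
  proof (rule nn_integral_mono)
    fix x
    show "ennreal (L x) \<le> ennreal (log 2 (1 / c)) * indicator {0<..M} x"
    proof (cases "x \<in> {0<..M}")
      case True
      then have "c \<le> f x" "0 < f x" using fb[of x] c by auto
      then have "log 2 (1 / f x) \<le> log 2 (1 / c)" using c by (simp add: log_divide)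
      then show ?thesis using True by (simp add: L_def ennreal_leI)
    qed (auto simp: L_def)
  qed
  also have "\<dots> = ennreal (log 2 (1 / c)) * ennreal M"
    using M by (subst nn_integral_cmult_indicator) auto
  also have "\<dots> < top" by (simp add: ennreal_mult_less_top)
  finally obtain r where r: "0 \<le> r" "(\<integral>\<^sup>+ x. ennreal (L x) \<partial>lborel) = ennreal r"
    using less_top_ennreal by blast
  have "(L has_integral r) UNIV"
    by (rule nn_integral_has_integral[OF Lmeas L0 r(2) r(1)])
  then have "((\<lambda>x. if x \<in> {0..M} then log 2 (1 / f x) else 0) has_integral r) UNIV"
    by (rule has_integral_spike[OF negligible_sing[of 0], rotated]) (auto simp: L_def)
  then have I1: "((\<lambda>x. log 2 (1 / f x)) has_integral r) {0..M}"
    unfolding has_integral_restrict_UNIV .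
  have "(R has_integral r) UNIV"
    by (rule nn_integral_has_integral[OF Rmeas R0 _ r(1)]) (use same r in simp)
  then have I2: "((\<lambda>y. h y / (y * ln 2)) has_integral r) {0..1}"
    unfolding R_def has_integral_restrict_UNIV .
  show ?thesis using I1 I2 by blast
qed



lemma tail_gt_ge: "tail_gt p i = tail_ge p (Suc i)"
  unfolding tail_gt_def tail_ge_def
  by (simp add: greaterThanLessThan_eq atLeastSucLessThan_greaterThanLessThan)

lemma tail_ge_split: "i < length p \<Longrightarrow> tail_ge p i = p ! i + tail_gt p i"
  unfolding tail_gt_def tail_ge_def
  by (simp add: sum.atLeast_Suc_lessThan atLeastSucLessThan_greaterThanLessThan)

lemma pd_nonneg: "is_pdist p \<Longrightarrow> j < length p \<Longrightarrow> 0 \<le> p ! j"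
  unfolding is_pdist_def by auto

lemma pd_sorted: "is_pdist p \<Longrightarrow> i \<le> j \<Longrightarrow> j < length p \<Longrightarrow> p ! j \<le> p ! i"
  unfolding is_pdist_def
  by (metis order.refl le_neq_implies_less sorted_wrt_nth_less)

lemma tail_ge_nonneg: "is_pdist p \<Longrightarrow> 0 \<le> tail_ge p i"
  unfolding tail_ge_def by (auto intro!: sum_nonneg pd_nonneg)

lemma tail_ge_anti: "is_pdist p \<Longrightarrow> i \<le> j \<Longrightarrow> tail_ge p j \<le> tail_ge p i"
  unfolding tail_ge_def by (rule sum_mono2) (auto intro: pd_nonneg)

lemma tail_ge_0: "tail_ge p 0 = mass p"
  unfolding tail_ge_def mass_def by (simp add: sum_list_sum_nth atLeast0LessThan)

lemma tail_ge_len: "tail_ge p (length p) = 0"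
  unfolding tail_ge_def by simp

lemma sketch_idx:
  assumes p: "is_pdist p" and x: "0 < x" "x \<le> mass p"
  obtains i where "i < length p" "tail_gt p i < x" "x \<le> tail_ge p i" "sketch p x = p ! i"
proof -
  define A where "A = {i. i < length p \<and> x \<le> tail_ge p i}"
  have "length p \<noteq> 0"
    using x by (auto simp: mass_def)
  then have "0 \<in> A" using x by (simp add: A_def tail_ge_0)
  have fin: "finite A" unfolding A_def by auto
  define i where "i = Max A"
  have iA: "i \<in> A" unfolding i_def using Max_in[OF fin] \<open>0 \<in> A\<close> by blast
  have "Suc i \<notin> A"
  proof
    assume "Suc i \<in> A"
    then have "Suc i \<le> i" unfolding i_def using Max_ge[OF fin] by blast
    then show False by simp
  qed
  have gt: "tail_gt p i < x"
  proof (cases "Suc i = length p")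
    case True then show ?thesis using x by (simp add: tail_gt_ge tail_ge_len)
  next
    case False then show ?thesis using \<open>Suc i \<notin> A\<close> iA by (auto simp: A_def tail_gt_ge)
  qed
  have uniq: "j = i" if "j < length p" "tail_gt p j < x" "x \<le> tail_ge p j" for j
  proof (rule ccontr)
    assume "j \<noteq> i"
    then consider "j < i" | "i < j" by linarith
    then show False
    proof cases
      case 1
      then have "tail_ge p i \<le> tail_ge p (Suc j)" using tail_ge_anti[OF p] by simp
      then show False using that iA by (auto simp: A_def tail_gt_ge)
    next
      case 2
      then have "tail_ge p j \<le> tail_ge p (Suc i)" using tail_ge_anti[OF p] by simp
      then show False using that gt by (auto simp: tail_gt_ge)
    qed
  qed
  have "sketch p x = p ! i"
    unfolding sketch_def
  proof (rule the_equality)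
    show "\<exists>i'<length p. tail_gt p i' < x \<and> x \<le> tail_ge p i' \<and> p ! i = p ! i'"
      using iA gt by (auto simp: A_def)
  next
    fix v assume "\<exists>i'<length p. tail_gt p i' < x \<and> x \<le> tail_ge p i' \<and> v = p ! i'"
    then show "v = p ! i" using uniq by blast
  qed
  then show ?thesis using that iA gt by (auto simp: A_def)
qed

lemma sketch_props:
  assumes p: "is_pdist p" and x: "0 < x" "x \<le> mass p"
  shows "0 < sketch p x" "sketch p x \<le> 1" "sketch p x \<in> set p"
    "sketch p x \<le> y \<longleftrightarrow> x \<le> inv_sketch p y"
proof -
  obtain i where i: "i < length p" "tail_gt p i < x" "x \<le> tail_ge p i" "sketch p x = p ! i"
    using sketch_idx[OF p x] by blast
  have split: "tail_ge p i = p ! i + tail_gt p i" using tail_ge_split[OF i(1)] .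
  show "0 < sketch p x" using i split by simp
  have "p ! i \<le> tail_ge p i" using split tail_ge_nonneg[OF p, of "Suc i"] by (simp add: tail_gt_ge)
  also have "\<dots> \<le> tail_ge p 0" by (rule tail_ge_anti[OF p]) simp
  also have "\<dots> \<le> 1" using p by (simp add: tail_ge_0 is_pdist_def)
  finally show "sketch p x \<le> 1" using i by simp
  show "sketch p x \<in> set p" using i by simp
  show "sketch p x \<le> y \<longleftrightarrow> x \<le> inv_sketch p y"
  proof
    assume le: "sketch p x \<le> y"
    have "tail_ge p i = (\<Sum>j<length p. if i \<le> j then p ! j else 0)"
      unfolding tail_ge_def
      by (subst sum.inter_filter[symmetric]) (auto intro!: sum.cong)
    also have "\<dots> \<le> inv_sketch p y"
      unfolding inv_sketch_def
    proof (rule sum_mono)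
      fix j assume j: "j \<in> {..<length p}"
      show "(if i \<le> j then p ! j else 0) \<le> (if p ! j \<le> y then p ! j else 0)"
        using pd_sorted[OF p, of i j] pd_nonneg[OF p, of j] j le i by auto
    qed
    finally show "x \<le> inv_sketch p y" using i by simp
  next
    assume le: "x \<le> inv_sketch p y"
    show "sketch p x \<le> y"
    proof (rule ccontr)
      assume gy: "\<not> sketch p x \<le> y"
      have "inv_sketch p y \<le> (\<Sum>j<length p. if i < j then p ! j else 0)"
        unfolding inv_sketch_def
      proof (rule sum_mono)
        fix j assume j: "j \<in> {..<length p}"
        show "(if p ! j \<le> y then p ! j else 0) \<le> (if i < j then p ! j else 0)"
          using pd_sorted[OF p, of j i] pd_nonneg[OF p, of j] j gy i by auto
      qed
      also have "\<dots> = tail_gt p i"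
        unfolding tail_gt_def
        by (subst sum.inter_filter[symmetric]) (auto intro!: sum.cong)
      finally show False using le i by simp
    qed
  qed
qed

lemma inv_sketch_bounds:
  assumes p: "is_pdist p"
  shows "0 \<le> inv_sketch p y" "inv_sketch p y \<le> mass p"
proof -
  show "0 \<le> inv_sketch p y" unfolding inv_sketch_def
    by (auto intro!: sum_nonneg pd_nonneg[OF p])
  show "inv_sketch p y \<le> mass p"
    unfolding inv_sketch_def mass_def sum_list_sum_nth atLeast0LessThan
    by (rule sum_mono) (auto intro: pd_nonneg[OF p])
qed


theorem lemma3:
  fixes S :: "real list set" and M :: real
  assumes "finite S" and "S \<noteq> {}"
    and "\<forall>p\<in>S. is_pdist p"
    and "\<forall>p\<in>S. mass p = M"
  shows "(\<lambda>x. log 2 (1 / profile S x)) integrable_on {0..M}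
    \<and> (\<lambda>y. inv_prof S y / (y * ln 2)) integrable_on {0..1}
    \<and> integral {0..M} (\<lambda>x. log 2 (1 / profile S x))
      = integral {0..1} (\<lambda>y. inv_prof S y / (y * ln 2))"
proof -
  note fin = assms(1) and ne = assms(2)
  have pd: "\<And>p. p \<in> S \<Longrightarrow> is_pdist p" and ms: "\<And>p. p \<in> S \<Longrightarrow> mass p = M"
    using assms(3,4) by auto
  obtain p0 where p0: "p0 \<in> S" using ne by blast
  have M0: "0 \<le> M" using tail_ge_nonneg[OF pd[OF p0], of 0] ms[OF p0] by (simp add: tail_ge_0)
  define V where "V = insert 1 {v. \<exists>p\<in>S. v \<in> set p \<and> 0 < v}"
  have finV: "finite V"
  proof -
    have "V \<subseteq> insert 1 (\<Union>p\<in>S. set p)" unfolding V_def by auto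
    moreover have "finite (insert 1 (\<Union>p\<in>S. set p))" using fin by auto
    ultimately show ?thesis by (rule finite_subset)
  qed
  define c where "c = Min V"
  have c0: "0 < c" unfolding c_def using finV by (subst Min_gr_iff) (auto simp: V_def)
  have fins: "finite ((\<lambda>p. sketch p x) ` S)" for x using fin by simp
  have fini: "finite ((\<lambda>p. inv_sketch p y) ` S)" for y using fin by simp
  have eq: "profile S x \<le> y \<longleftrightarrow> x \<le> inv_prof S y" if x: "0 < x" "x \<le> M" for x y
  proof -
    have "profile S x \<le> y \<longleftrightarrow> (\<exists>p\<in>S. sketch p x \<le> y)"
      unfolding profile_def using fins ne by (subst Min_le_iff) auto
    also have "\<dots> \<longleftrightarrow> (\<exists>p\<in>S. x \<le> inv_sketch p y)"
      using sketch_props(4)[OF pd, of _ x y] ms x by auto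
    also have "\<dots> \<longleftrightarrow> x \<le> inv_prof S y"
      unfolding inv_prof_def using fini ne by (subst Max_ge_iff) auto
    finally show ?thesis .
  qed
  have fb: "c \<le> profile S x \<and> profile S x \<le> 1" if x: "0 < x" "x \<le> M" for x
  proof -
    have "profile S x \<in> (\<lambda>p. sketch p x) ` S"
      unfolding profile_def using fins[of x] ne by (intro Min_in) auto
    then obtain p where p: "p \<in> S" "profile S x = sketch p x" by auto
    have xm: "x \<le> mass p" using ms[OF p(1)] x by simp
    have "sketch p x \<in> V" unfolding V_def
      using sketch_props(1,3)[OF pd[OF p(1)] x(1) xm] p(1) by auto
    then have "c \<le> sketch p x" unfolding c_def using finV by (simp add: Min_le)
    then show ?thesis using p sketch_props(2)[OF pd[OF p(1)] x(1) xm] by simp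
  qed
  have hb: "0 \<le> inv_prof S y \<and> inv_prof S y \<le> M" for y
  proof -
    have "0 \<le> inv_prof S y"
      unfolding inv_prof_def using fini ne p0 inv_sketch_bounds(1)[OF pd[OF p0], of y]
      by (subst Max_ge_iff) auto
    moreover have "inv_prof S y \<le> M"
      unfolding inv_prof_def using fini ne inv_sketch_bounds(2)[OF pd] ms
      by (subst Max_le_iff) auto
    ultimately show ?thesis by simp
  qed
  obtain r where r: "((\<lambda>x. log 2 (1 / profile S x)) has_integral r) {0..M}"
    "((\<lambda>y. inv_prof S y / (y * ln 2)) has_integral r) {0..1}"
    using layer[of M c "profile S" "inv_prof S", OF M0 c0 fb eq hb] by blast
  then show ?thesis by (auto simp: integral_unique)
qed

end
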